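(* Let $H$ be a regular hexagon with vertices $W_0,\dots,W_5$ in counterclockwise order, indices taken mod 6. Let $P\in\mathbb{C}$ be arbitrary. Put $T_0=P$ and $T_{k+1}=W_k+\rho(T_k-W_k)$ for $k=0,\dots,4$. For $k=0,\dots,5$, the satellite triangle $S_k$ has base $W_{k-1}W_k$ (with $W_{-1}=W_5$) and apex $T_k$. Its oriented area $\mathcal{A}(S_k)$ is defined as the signed area of the ordered triple $(W_k,W_{k-1},T_k)$, positive when counterclockwise; equivalently $\tfrac12|W_kW_{k-1}|$ times the signed distance from $T_k$ to line $W_{k-1}W_k$, counted positive outside $H$. Then $$\sum_{k=0}^5\mathcal{A}(S_k)=\operatorname{Area}(H),$$ independently of $P$.
   Context: The plane is identified with $\mathbb{C}$, and $\rho=e^{2\pi i/3}$. $S_0$ is the triangle $W_5W_0P$. For $k\ge1$, $S_k$ is the flank triangle at $W_{k-1}$ between $H$ and the regular hexagon erected on the side $W_{k-1}T_{k-1}$ of $S_{k-1}$, and $T_k$ is the vertex of that hexagon adjacent to $W_{k-1}$. *)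

theory Defs
  imports "HOL-Analysis.Analysis"
begin

definition rho :: complex where
  "rho = cis (2 * pi / 3)"

definition regular_hexagon_ccw :: "(nat \<Rightarrow> complex) \<Rightarrow> bool" where
  "regular_hexagon_ccw W \<longleftrightarrow>
     (\<exists>c a. a \<noteq> 0 \<and> (\<forall>k. W k = c + a * cis (real k * pi / 3)))"

definition signed_area :: "complex \<Rightarrow> complex \<Rightarrow> complex \<Rightarrow> real" where
  "signed_area A B C = Im (cnj (B - A) * (C - A)) / 2"

fun apex :: "(nat \<Rightarrow> complex) \<Rightarrow> complex \<Rightarrow> nat \<Rightarrow> complex" where
  "apex W P 0 = P"
| "apex W P (Suc k) = W k + rho * (apex W P k - W k)"

definition hexagon_area :: "(nat \<Rightarrow> complex) \<Rightarrow> real" where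
  "hexagon_area W = measure lebesgue (convex hull (W ` {0..<6}))"

end

theory Submission
  imports Defs
begin


lemma Zlem:
  fixes w a c P :: complex
  assumes w2: "w^2 = w - 1" and cw: "cnj w = 1 - w"
  and Wk: "\<And>k. W k = c + a * w ^ k" and r: "rho = w^2"
  shows "(\<Sum>k<6. cnj (W ((k + 5) mod 6) - W k) * (apex W P k - W k)) = 6 * w * (a * cnj a)"
proof -
  define D where "D k = apex W P k - W k" for k
  define E where "E = P - c - a"
  have w3: "w^3 = -1" using w2 by (simp add: power3_eq_cube power2_eq_square) algebra
  have p: "w^4 = -w" "w^5 = 1 - w" "w^6 = 1"
    using w2 w3 by (simp_all add: power_add[of w 3 1, simplified] power_add[of w 3 2, simplified] power_add[of w 3 3, simplified]) algebra+
  have step: "D (k+1) = a * (w^k - w^(k+1)) + w^2 * D k" for k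
    by (simp add: D_def Wk r algebra_simps)
  have e2: "D 2 = a*(w^1 - w^2) + w^2 * D 1" by (simp add: D_def Wk r numeral_eq_Suc algebra_simps)
  have e3: "D 3 = a*(w^2 - w^3) + w^2 * D 2" by (simp add: D_def Wk r numeral_eq_Suc algebra_simps)
  have e4: "D 4 = a*(w^3 - w^4) + w^2 * D 3" by (simp add: D_def Wk r numeral_eq_Suc algebra_simps)
  have e5: "D 5 = a*(w^4 - w^5) + w^2 * D 4" by (simp add: D_def Wk r numeral_eq_Suc algebra_simps)
  have D0: "D 0 = E" by (simp add: D_def E_def Wk)
  have D1: "D 1 = (w - 1) * E + (1 - w) * a"
    using step[of 0] D0 w2 by (simp; algebra)
  have D2: "D 2 = (- w) * E + (1 + w) * a"
    using e2 D1 w2 by algebra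
  have D3: "D 3 = E + (2*w - 2) * a"
    using e3 D2 w2 w3 by algebra
  have D4: "D 4 = (w - 1) * E + (- w - 1) * a"
    using e4 D3 w2 w3 by algebra
  have D5: "D 5 = (- w) * E + (1 - w) * a"
    using e5 D4 w2 w3 p by algebra
  have sum6: "(\<Sum>k<6::nat. f k) = f 0 + f 1 + f 2 + f 3 + f 4 + f 5" for f :: "nat \<Rightarrow> complex"
    by (simp add: numeral_eq_Suc)
  show ?thesis
    unfolding sum6 D_def[symmetric]
    apply (simp add: D0 D1[simplified] D2 D3 D4 D5 Wk cw)
    using w2 w3 p cw by algebra
qed


definition c2v :: "complex \<Rightarrow> real^2" where
  "c2v z = (\<chi> i. if i = 1 then Re z else Im z)"
definition v2c :: "real^2 \<Rightarrow> complex" where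
  "v2c v = Complex (v$1) (v$2)"

lemma c2v_nth[simp]: "c2v z $ 1 = Re z" "c2v z $ 2 = Im z"
  by (simp_all add: c2v_def)

lemma v2c_c2v[simp]: "v2c (c2v z) = z" by (simp add: v2c_def complex_eq_iff)
lemma c2v_v2c[simp]: "c2v (v2c v) = v"
  by (simp add: c2v_def v2c_def vec_eq_iff) (metis exhaust_2)

lemma lin_v2c: "bounded_linear v2c"
  unfolding linear_conv_bounded_linear[symmetric]
  by (auto simp: linear_iff v2c_def complex_eq_iff)

lemma lin_c2v: "linear c2v"
  by (auto simp: linear_iff c2v_def vec_eq_iff)

lemma Basis2: "(Basis::(real^2) set) = {axis 1 1, axis 2 1}"
  unfolding Basis_vec_def UNIV_2 by auto

lemma box2: "box (l::real^2) u = {x. l$1 < x$1 \<and> x$1 < u$1 \<and> l$2 < x$2 \<and> x$2 < u$2}"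
  by (auto simp: box_def Basis2 inner_axis)

lemma prodB2: "(\<Prod>b\<in>(Basis::(real^2) set). f b) = f (axis 1 1) * f (axis 2 1)"
proof -
  have ne: "axis 1 (1::real) \<noteq> (axis 2 1 :: real^2)" by (simp add: axis_eq_axis)
  show ?thesis unfolding Basis2 using ne by simp
qed

lemma lborel_complex: "(lborel :: complex measure) = distr lborel borel v2c"
proof (rule lborel_eqI)
  have meas: "v2c \<in> borel_measurable borel"
    using lin_v2c by (intro borel_measurable_continuous_onI linear_continuous_on) 
  fix l u :: complex
  assume le: "\<And>b. b \<in> Basis \<Longrightarrow> l \<bullet> b \<le> u \<bullet> b"
  have pre: "v2c -` box l u = box (c2v l) (c2v u)"
    by (auto simp: box2 box_def Basis_complex_def v2c_def)
  have le2: "Re l \<le> Re u" "Im l \<le> Im u" using le[of 1] le[of \<i>] by (auto simp: Basis_complex_def)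
  have "emeasure (distr lborel borel v2c) (box l u) = emeasure lborel (box (c2v l) (c2v u))"
    proof -
    have meas': "v2c \<in> lborel \<rightarrow>\<^sub>M borel" using meas by simp
    show ?thesis by (subst emeasure_distr[OF meas']) (simp_all add: pre)
  qed
  also have "\<dots> = ennreal ((Re u - Re l) * (Im u - Im l))"
    proof -
    have c: "\<forall>b\<in>Basis. c2v l \<bullet> b \<le> c2v u \<bullet> b"
      using le2 unfolding Basis2 by (simp add: inner_axis)
    show ?thesis unfolding emeasure_lborel_box_eq using c by (simp add: prodB2 inner_axis)
  qed
  also have "ennreal ((Re u - Re l) * (Im u - Im l)) = ennreal (\<Prod>b\<in>Basis. (u - l) \<bullet> b)"
    by (simp add: Basis_complex_def)
  finally show "emeasure (distr lborel borel v2c) (box l u) = (\<Prod>b\<in>Basis. (u - l) \<bullet> b)" .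
qed (rule sets_distr)
lemma cont_c2v: "continuous_on A c2v"
  using lin_c2v by (simp add: linear_continuous_on linear_conv_bounded_linear)

lemma meas_transfer:
  assumes "compact S"
  shows "measure lebesgue S = measure lebesgue (c2v ` S)"
proof -
  have bS: "S \<in> sets borel" using assms by (simp add: compact_imp_closed borel_closed)
  have cS: "compact (c2v ` S)" using assms cont_c2v by (rule compact_continuous_image[rotated])
  have bS': "c2v ` S \<in> sets borel" using cS by (simp add: compact_imp_closed borel_closed)
  have meas: "v2c \<in> borel_measurable borel"
    using lin_v2c by (intro borel_measurable_continuous_onI linear_continuous_on)
  have meas': "v2c \<in> lborel \<rightarrow>\<^sub>M borel" using meas by simp
  have pre: "v2c -` S \<inter> space lborel = c2v ` S"
    by (auto simp: image_iff) (metis c2v_v2c)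
  have "measure lebesgue S = measure lborel S" using bS by simp
  also have "\<dots> = measure (distr lborel borel v2c) S" by (simp only: lborel_complex[symmetric])
  also have "\<dots> = measure lborel (c2v ` S)"
    by (subst measure_distr[OF meas' bS]) (simp only: pre)
  also have "\<dots> = measure lebesgue (c2v ` S)" using bS' by simp
  finally show ?thesis .
qed

lemma mult_meas:
  assumes "compact S"
  shows "measure lebesgue ((\<lambda>z. a * z) ` S) = (cmod a)^2 * measure lebesgue S"
proof -
  define M where "M v = c2v (a * v2c v)" for v
  have "M = c2v \<circ> ((\<lambda>z. a * z) \<circ> v2c)" by (simp add: M_def fun_eq_iff)
  moreover have "linear (c2v \<circ> ((\<lambda>z. a * z) \<circ> v2c))"
    by (intro linear_compose lin_c2v bounded_linear.linear[OF lin_v2c] bounded_linear.linear[OF bounded_linear_mult_right])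
  ultimately have linM: "linear M" by simp
  have cS: "compact (c2v ` S)" using assms cont_c2v by (rule compact_continuous_image[rotated])
  have cT: "compact ((\<lambda>z. a * z) ` S)" using assms
    by (intro compact_continuous_image continuous_intros)
  have img: "c2v ` ((\<lambda>z. a * z) ` S) = M ` (c2v ` S)"
    by (auto simp: M_def image_iff)
  have v1: "v2c (axis 1 1) = 1" "v2c (axis 2 1) = \<i>"
    by (simp_all add: v2c_def axis_def complex_eq_iff)
  have det: "det (matrix M) = (cmod a)^2"
  proof -
    have m: "matrix M $ 1 $ 1 = Re a" "matrix M $ 1 $ 2 = - Im a" "matrix M $ 2 $ 1 = Im a" "matrix M $ 2 $ 2 = Re a"
      by (simp_all add: matrix_def M_def v1)
    show ?thesis by (simp add: det_2 m cmod_power2 flip: power2_eq_square)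
  qed
  have "measure lebesgue ((\<lambda>z. a * z) ` S) = measure lebesgue (M ` (c2v ` S))"
    using meas_transfer[OF cT] img by simp
  also have "\<dots> = \<bar>det (matrix M)\<bar> * measure lebesgue (c2v ` S)"
    using cS linM by (intro measure_lebesgue_linear_transformation)
      (auto simp: compact_imp_bounded compact_imp_closed borel_closed)
  also have "\<dots> = (cmod a)^2 * measure lebesgue S"
    using det meas_transfer[OF assms] by simp
  finally show ?thesis .
qed


lemma mem_cbox_c: "z \<in> cbox a b \<longleftrightarrow> Re a \<le> Re z \<and> Re z \<le> Re b \<and> Im a \<le> Im z \<and> Im z \<le> Im b"
  by (auto simp: mem_box Basis_complex_def)

lemma meas_cbox_c: "Re a \<le> Re b \<Longrightarrow> Im a \<le> Im b \<Longrightarrow> measure lebesgue (cbox a b) = (Re b - Re a) * (Im b - Im a)"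
  by (simp add: content_cbox Basis_complex_def)

lemma negl_line: "p \<noteq> 0 \<or> q \<noteq> 0 \<Longrightarrow> negligible {z::complex. p * Re z + q * Im z = c}"
proof -
  assume "p \<noteq> 0 \<or> q \<noteq> 0"
  then have "Complex p q \<noteq> 0" by (auto simp: complex_eq_iff)
  then have "negligible {z. Complex p q \<bullet> z = c}" by (intro negligible_hyperplane) simp
  then show ?thesis by (simp add: inner_complex_def)
qed

lemma half_box:
  fixes a b :: complex and p q c :: real
  assumes le: "Re a \<le> Re b" "Im a \<le> Im b" and pq: "p \<noteq> 0 \<or> q \<noteq> 0"
    and cen: "p * (Re a + Re b) + q * (Im a + Im b) = 2 * c"
  shows "measure lebesgue (cbox a b \<inter> {z. p * Re z + q * Im z \<le> c}) = (Re b - Re a) * (Im b - Im a) / 2"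
proof -
  define K1 where "K1 = cbox a b \<inter> {z. p * Re z + q * Im z \<le> c}"
  define K2 where "K2 = cbox a b \<inter> {z. p * Re z + q * Im z \<ge> c}"
  have m1: "K1 \<in> lmeasurable" unfolding K1_def
    by (intro bounded_set_imp_lmeasurable) (auto intro: bounded_Int simp: closed_halfspace_le borel_closed)
  have K2img: "K2 = (\<lambda>z. (-1) *\<^sub>R z + (a + b)) ` K1"
  proof -
    have "z \<in> K2 \<longleftrightarrow> (a + b) - z \<in> K1" for z
      using cen by (auto simp: K1_def K2_def mem_cbox_c algebra_simps)
    then show ?thesis
      by (auto simp: image_iff) (metis add_diff_cancel_left' diff_add_cancel)+
  qed
  have eqm: "measure lebesgue K2 = measure lebesgue K1"
    unfolding K2img using measure_lebesgue_affine[of "-1" "a+b" K1] by simp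
  have m2: "K2 \<in> lmeasurable" unfolding K2_def
    by (intro bounded_set_imp_lmeasurable) (auto intro: bounded_Int simp: closed_halfspace_ge borel_closed)
  have un: "K1 \<union> K2 \<union> {} = cbox a b" by (auto simp: K1_def K2_def)
  have ng: "negligible (K1 \<inter> K2)"
    by (rule negligible_subset[OF negl_line[OF pq, of c]]) (auto simp: K1_def K2_def)
  have "measure lebesgue (cbox a b) = measure lebesgue K1 + measure lebesgue K2 + measure lebesgue {}"
    using measure_Un3_negligible[OF m1 m2 _ ng _ _ un] by auto
  then show ?thesis using meas_cbox_c[OF le] eqm by (simp add: K1_def)
qed
definition hexD :: "complex set" where
  "hexD = {z. \<bar>Im z\<bar> \<le> sqrt 3 / 2 \<and> sqrt 3 * \<bar>Re z\<bar> + \<bar>Im z\<bar> \<le> sqrt 3}"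

definition piece :: "nat \<Rightarrow> complex set" where
  "piece k = (if k = 0 then cbox (Complex (-1/2) (-sqrt 3/2)) (Complex (1/2) (sqrt 3/2))
     else if k = 1 then cbox (Complex (1/2) 0) (Complex 1 (sqrt 3/2)) \<inter> {z. sqrt 3 * Re z + 1 * Im z \<le> sqrt 3}
     else if k = 2 then cbox (Complex (1/2) (-sqrt 3/2)) (Complex 1 0) \<inter> {z. sqrt 3 * Re z + (-1) * Im z \<le> sqrt 3}
     else if k = 3 then cbox (Complex (-1) 0) (Complex (-1/2) (sqrt 3/2)) \<inter> {z. (- sqrt 3) * Re z + 1 * Im z \<le> sqrt 3}
     else cbox (Complex (-1) (-sqrt 3/2)) (Complex (-1/2) 0) \<inter> {z. (- sqrt 3) * Re z + (-1) * Im z \<le> sqrt 3})"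

lemma piece_meas: "k \<le> 4 \<Longrightarrow> measure lebesgue (piece k) = (if k = 0 then sqrt 3 else sqrt 3 / 8)"
proof -
  assume k: "k \<le> 4"
  have s: "sqrt 3 * sqrt 3 = (3::real)" by simp
  have sp: "sqrt 3 > (0::real)" by simp
  consider "k = 0" | "k = 1" | "k = 2" | "k = 3" | "k = 4" using k by linarith
  then show ?thesis
  proof cases
    case 1
    have "piece 0 = cbox (Complex (-1/2) (-sqrt 3/2)) (Complex (1/2) (sqrt 3/2))" by (simp add: piece_def)
    then show ?thesis using sp 1 by (simp only:) (subst meas_cbox_c, auto)
  next
    case 2
    have "piece 1 = cbox (Complex (1/2) 0) (Complex 1 (sqrt 3/2)) \<inter> {z. sqrt 3 * Re z + 1 * Im z \<le> sqrt 3}" by (simp add: piece_def)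
    then show ?thesis using sp 2 by (simp only:) (subst half_box, auto simp: algebra_simps)
  next
    case 3
    have "piece 2 = cbox (Complex (1/2) (-sqrt 3/2)) (Complex 1 0) \<inter> {z. sqrt 3 * Re z + (-1) * Im z \<le> sqrt 3}" by (simp add: piece_def)
    then show ?thesis using sp 3 by (simp only:) (subst half_box, auto simp: algebra_simps)
  next
    case 4
    have "piece 3 = cbox (Complex (-1) 0) (Complex (-1/2) (sqrt 3/2)) \<inter> {z. (- sqrt 3) * Re z + 1 * Im z \<le> sqrt 3}" by (simp add: piece_def)
    then show ?thesis using sp 4 by (simp only:) (subst half_box, auto simp: algebra_simps)
  next
    case 5
    have "piece 4 = cbox (Complex (-1) (-sqrt 3/2)) (Complex (-1/2) 0) \<inter> {z. (- sqrt 3) * Re z + (-1) * Im z \<le> sqrt 3}" by (simp add: piece_def)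
    then show ?thesis using sp 5 by (simp only:) (subst half_box, auto simp: algebra_simps)
  qed
qed
lemma piece_sub: "z \<in> piece k \<Longrightarrow> k \<le> 4 \<Longrightarrow> z \<in> hexD"
proof -
  assume z: "z \<in> piece k" and k: "k \<le> 4"
  have sp: "sqrt 3 > (0::real)" by simp
  have h: "\<bar>x\<bar> \<le> 1/2 \<Longrightarrow> sqrt 3 * \<bar>x\<bar> \<le> sqrt 3 * (1/2)" for x :: real
    using sp by (intro mult_left_mono) auto
  consider "k = 0" | "k = 1" | "k = 2" | "k = 3" | "k = 4" using k by linarith
  then show ?thesis
  proof cases
    case 1
    then have r: "\<bar>Re z\<bar> \<le> 1/2" "\<bar>Im z\<bar> \<le> sqrt 3 / 2" using z by (auto simp: piece_def mem_cbox_c)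
    then show ?thesis unfolding hexD_def mem_Collect_eq using h[OF r(1)] by linarith
  qed (use z sp in \<open>auto simp: piece_def hexD_def mem_cbox_c\<close>)
qed

lemma hexD_sub: "z \<in> hexD \<Longrightarrow> \<exists>k\<le>4. z \<in> piece k"
proof -
  assume z: "z \<in> hexD"
  have sp: "sqrt 3 > (0::real)" by simp
  have a1: "\<bar>Re z\<bar> \<le> 1"
  proof (rule ccontr)
    assume "\<not> \<bar>Re z\<bar> \<le> 1"
    then have "sqrt 3 * 1 < sqrt 3 * \<bar>Re z\<bar>" using sp by (intro mult_strict_left_mono) auto
    moreover have "sqrt 3 * \<bar>Re z\<bar> + \<bar>Im z\<bar> \<le> sqrt 3" using z by (simp add: hexD_def)
    ultimately show False using abs_ge_zero[of "Im z"] by linarith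
  qed
  show ?thesis
  proof (cases "\<bar>Re z\<bar> \<le> 1/2")
    case True
    then have "z \<in> piece 0" using z by (auto simp: piece_def hexD_def mem_cbox_c)
    then show ?thesis by blast
  next
    case False
    then have "z \<in> piece 1 \<or> z \<in> piece 2 \<or> z \<in> piece 3 \<or> z \<in> piece 4"
      using z a1 by (auto simp: piece_def hexD_def mem_cbox_c abs_if split: if_splits)
    moreover have "(1::nat) \<le> 4" "(2::nat) \<le> 4" "(3::nat) \<le> 4" "(4::nat) \<le> 4" by auto
    ultimately show ?thesis by blast
  qed
qed

lemma hexD_union: "hexD = \<Union> (piece ` {0..4})"
  using piece_sub hexD_sub by (auto simp: image_iff) (metis atLeastAtMost_iff le0)

lemma piece_int: "i \<le> 4 \<Longrightarrow> j \<le> 4 \<Longrightarrow> i \<noteq> j \<Longrightarrow>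
   piece i \<inter> piece j \<subseteq> {z. 1 * Re z + 0 * Im z = 1/2} \<union> {z. 1 * Re z + 0 * Im z = -1/2} \<union> {z. 0 * Re z + 1 * Im z = 0}"
proof -
  assume i: "i \<le> 4" and j: "j \<le> 4" and ij: "i \<noteq> j"
  have sp: "sqrt 3 > (0::real)" by simp
  have "i \<in> {0,1,2,3,4}" "j \<in> {0,1,2,3,4}" using i j by auto
  then show ?thesis using ij sp by (auto simp: piece_def mem_cbox_c)
qed

lemma hexD_meas: "measure lebesgue hexD = 3 * sqrt 3 / 2"
proof -
  have neg: "negligible ({z. 1 * Re z + 0 * Im z = 1/2} \<union> {z. 1 * Re z + 0 * Im z = -1/2} \<union> {z::complex. 0 * Re z + 1 * Im z = 0})"
    by (intro negligible_Un negl_line) auto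
  have lm: "piece k \<in> lmeasurable" for k
    unfolding piece_def
    by (auto intro!: bounded_set_imp_lmeasurable intro: bounded_Int simp: closed_halfspace_le borel_closed)
  have "measure lebesgue hexD = (\<Sum>k\<in>{0..4}. measure lebesgue (piece k))"
    unfolding hexD_union
  proof (rule measure_negligible_finite_Union_image)
    show "pairwise (\<lambda>x y. negligible (piece x \<inter> piece y)) {0..4}"
      unfolding pairwise_def using negligible_subset[OF neg piece_int] by auto
  qed (auto simp: lm)
  also have "\<dots> = (\<Sum>k\<in>{0..4::nat}. (if k = 0 then sqrt 3 else sqrt 3 / 8))"
    by (rule sum.cong) (auto simp: piece_meas)
  also have "\<dots> = 3 * sqrt 3 / 2" by (simp add: numeral_eq_Suc)
  finally show ?thesis .
qed
definition hexV :: "complex set" where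
  "hexV = {Complex 1 0, Complex (1/2) (sqrt 3/2), Complex (-1/2) (sqrt 3/2), Complex (-1) 0,
           Complex (-1/2) (-sqrt 3/2), Complex (1/2) (-sqrt 3/2)}"

lemma convex_line: "convex {z. p * Re z + q * Im z \<le> (c::real)}"
proof -
  have "{z. p * Re z + q * Im z \<le> c} = {z. Complex p q \<bullet> z \<le> c}" by (simp add: inner_complex_def)
  then show ?thesis by (simp add: convex_halfspace_le)
qed

lemma absq: "0 \<le> (s::real) \<Longrightarrow> (s*\<bar>x\<bar> + \<bar>y\<bar> \<le> c) \<longleftrightarrow> (s*x+y \<le> c \<and> s*x - y \<le> c \<and> -s*x + y \<le> c \<and> -s*x - y \<le> c)"
proof -
  assume s: "0 \<le> s"
  show ?thesis
  proof (cases "x \<ge> 0")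
    case True
    then have "s * x \<ge> 0" using s by simp
    then show ?thesis using True by (cases "y \<ge> 0") auto
  next
    case False
    then have "s * x \<le> 0" using s by (simp add: mult_nonneg_nonpos)
    then show ?thesis using False by (cases "y \<ge> 0") auto
  qed
qed

lemma convex_hexD: "convex hexD"
proof -
  have eq: "hexD = {z. 0 * Re z + 1 * Im z \<le> sqrt 3 / 2} \<inter> {z. 0 * Re z + (-1) * Im z \<le> sqrt 3 / 2}
     \<inter> {z. sqrt 3 * Re z + 1 * Im z \<le> sqrt 3} \<inter> {z. sqrt 3 * Re z + (-1) * Im z \<le> sqrt 3}
     \<inter> {z. (-sqrt 3) * Re z + 1 * Im z \<le> sqrt 3} \<inter> {z. (-sqrt 3) * Re z + (-1) * Im z \<le> sqrt 3}"
    unfolding hexD_def using absq[of "sqrt 3"] by (auto simp: abs_le_iff)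
  show ?thesis unfolding eq by (intro convex_Int convex_line)
qed

lemma seg_in: "convex H \<Longrightarrow> u \<in> H \<Longrightarrow> v \<in> H \<Longrightarrow> 0 \<le> m \<Longrightarrow> m \<le> 1 \<Longrightarrow> z = (1-m) *\<^sub>R u + m *\<^sub>R v \<Longrightarrow> z \<in> H"
  using convexD[of H u v "1-m" m] by simp

lemma vert_in:
  assumes H: "convex H" and t: "Complex x t \<in> H" "Complex x (-t) \<in> H" and y: "\<bar>y\<bar> \<le> t"
  shows "Complex x y \<in> H"
proof (cases "t = 0")
  case True then show ?thesis using t y by simp
next
  case False
  then have tp: "t > 0" using y by linarith
  show ?thesis
    by (rule seg_in[OF H t(2) t(1), of "(y + t) / (2*t)"])
       (use tp y in \<open>auto simp: complex_eq_iff field_simps\<close>)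
qed

lemma hexD_hull: "hexD = convex hull hexV"
proof
  show "convex hull hexV \<subseteq> hexD"
    by (intro hull_minimal convex_hexD) (auto simp: hexV_def hexD_def)
next
  show "hexD \<subseteq> convex hull hexV"
  proof
    fix z assume z: "z \<in> hexD"
    define x where "x = Re z"
    define y where "y = Im z"
    have zz: "z = Complex x y" by (simp add: x_def y_def)
    have sp: "sqrt 3 > (0::real)" by simp
    let ?H = "convex hull hexV"
    have H: "convex ?H" by simp
    have V: "Complex 1 0 \<in> ?H" "Complex (1/2) (sqrt 3/2) \<in> ?H" "Complex (-1/2) (sqrt 3/2) \<in> ?H"
       "Complex (-1) 0 \<in> ?H" "Complex (-1/2) (-sqrt 3/2) \<in> ?H" "Complex (1/2) (-sqrt 3/2) \<in> ?H"
      by (auto simp: hexV_def intro: hull_inc)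
    have zD: "\<bar>y\<bar> \<le> sqrt 3 / 2" "sqrt 3 * \<bar>x\<bar> + \<bar>y\<bar> \<le> sqrt 3"
      using z by (auto simp: hexD_def x_def y_def)
    have a1: "\<bar>x\<bar> \<le> 1"
    proof (rule ccontr)
      assume "\<not> \<bar>x\<bar> \<le> 1"
      then have "sqrt 3 * 1 < sqrt 3 * \<bar>x\<bar>" using sp by (intro mult_strict_left_mono) auto
      then show False using zD abs_ge_zero[of y] by linarith
    qed
    consider "x \<ge> 1/2" | "\<bar>x\<bar> \<le> 1/2" | "x \<le> -1/2" by linarith
    then show "z \<in> ?H"
    proof cases
      case 1
      have top: "Complex x (sqrt 3 * (1 - x)) \<in> ?H"
        by (rule seg_in[OF H V(1) V(2), of "2*(1-x)"]) (use 1 a1 in \<open>auto simp: complex_eq_iff algebra_simps\<close>)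
      have bot: "Complex x (- (sqrt 3 * (1 - x))) \<in> ?H"
        by (rule seg_in[OF H V(1) V(6), of "2*(1-x)"]) (use 1 a1 in \<open>auto simp: complex_eq_iff algebra_simps\<close>)
      have "\<bar>y\<bar> \<le> sqrt 3 * (1 - x)" using zD 1 by (simp add: algebra_simps)
      then show ?thesis unfolding zz by (rule vert_in[OF H top bot])
    next
      case 2
      have top: "Complex x (sqrt 3 / 2) \<in> ?H"
        by (rule seg_in[OF H V(2) V(3), of "1/2 - x"]) (use 2 in \<open>auto simp: complex_eq_iff algebra_simps\<close>)
      have bot: "Complex x (- (sqrt 3 / 2)) \<in> ?H"
        by (rule seg_in[OF H V(6) V(5), of "1/2 - x"]) (use 2 in \<open>auto simp: complex_eq_iff algebra_simps\<close>)
      show ?thesis unfolding zz by (rule vert_in[OF H top bot zD(1)])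
    next
      case 3
      have top: "Complex x (sqrt 3 * (1 + x)) \<in> ?H"
        by (rule seg_in[OF H V(3) V(4), of "-2*x - 1"]) (use 3 a1 in \<open>auto simp: complex_eq_iff algebra_simps\<close>)
      have bot: "Complex x (- (sqrt 3 * (1 + x))) \<in> ?H"
        by (rule seg_in[OF H V(5) V(4), of "-2*x - 1"]) (use 3 a1 in \<open>auto simp: complex_eq_iff algebra_simps\<close>)
      have "\<bar>y\<bar> \<le> sqrt 3 * (1 + x)" using zD 3 by (simp add: algebra_simps)
      then show ?thesis unfolding zz by (rule vert_in[OF H top bot])
    qed
  qed
qed

lemma om_def: "cis (pi/3) = Complex (1/2) (sqrt 3/2)"
  by (simp add: cis.ctr cos_60 sin_60)

lemma cis_k: "cis (real k * pi / 3) = Complex (1/2) (sqrt 3/2) ^ k"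
proof -
  have "cis (real k * pi / 3) = cis (pi/3) ^ k" by (subst Complex.DeMoivre) simp
  then show ?thesis by (simp add: om_def)
qed

lemma om2: "Complex (1/2) (sqrt 3/2) ^ 2 = Complex (-1/2) (sqrt 3/2)"
proof -
  have s3: "sqrt 3 * sqrt 3 = (3::real)" by simp
  show ?thesis by (simp add: power2_eq_square complex_eq_iff s3)
qed

lemma rho_eq: "rho = Complex (1/2) (sqrt 3/2) ^ 2"
  using cis_k[of 2] by (simp add: rho_def)

theorem mainTheorem8:
  fixes W :: "nat \<Rightarrow> complex" and P :: complex
  assumes "regular_hexagon_ccw W"
  shows "(\<Sum>k<6. signed_area (W k) (W ((k + 5) mod 6)) (apex W P k)) = hexagon_area W"
proof -
  obtain c a where a: "a \<noteq> 0" and W: "\<And>k. W k = c + a * cis (real k * pi / 3)"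
    using assms unfolding regular_hexagon_ccw_def by blast
  define w where "w = Complex (1/2) (sqrt 3/2)"
  have w2: "w^2 = w - 1" using om2 by (simp add: w_def complex_eq_iff)
  have cw: "cnj w = 1 - w" by (simp add: w_def complex_eq_iff)
  have Wk: "\<And>k. W k = c + a * w ^ k" using W cis_k by (simp add: w_def)
  have r: "rho = w^2" using rho_eq by (simp add: w_def)
  have Z: "(\<Sum>k<6. cnj (W ((k + 5) mod 6) - W k) * (apex W P k - W k)) = 6 * w * (a * cnj a)"
    by (rule Zlem[OF w2 cw Wk r])
  have "(\<Sum>k<6. signed_area (W k) (W ((k + 5) mod 6)) (apex W P k))
      = Im (\<Sum>k<6. cnj (W ((k + 5) mod 6) - W k) * (apex W P k - W k)) / 2"
    by (simp add: signed_area_def Im_sum sum_divide_distrib)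
  also have "\<dots> = Im (6 * w * complex_of_real ((cmod a)^2)) / 2"
    unfolding Z by (simp only: complex_norm_square)
  also have "\<dots> = 3 * sqrt 3 / 2 * (cmod a)^2" by (simp add: w_def)
  finally have L: "(\<Sum>k<6. signed_area (W k) (W ((k + 5) mod 6)) (apex W P k)) = 3 * sqrt 3 / 2 * (cmod a)^2" .
  have pw: "w^0 = Complex 1 0" "w^1 = Complex (1/2) (sqrt 3/2)" "w^2 = Complex (-1/2) (sqrt 3/2)"
    "w^3 = Complex (-1) 0" "w^4 = Complex (-1/2) (-sqrt 3/2)" "w^5 = Complex (1/2) (-sqrt 3/2)"
  proof -
    have w3: "w^3 = -1" using w2 by (simp add: power3_eq_cube power2_eq_square) algebra
    show "w^0 = Complex 1 0" "w^1 = Complex (1/2) (sqrt 3/2)" "w^2 = Complex (-1/2) (sqrt 3/2)"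
      using om2 by (simp_all add: w_def complex_eq_iff)
    show "w^3 = Complex (-1) 0" using w3 by (simp add: complex_eq_iff)
    show "w^4 = Complex (-1/2) (-sqrt 3/2)" using w3 power_add[of w 3 1] by (simp add: w_def complex_eq_iff)
    show "w^5 = Complex (1/2) (-sqrt 3/2)" using w3 power_add[of w 3 2] om2 by (simp add: w_def complex_eq_iff)
  qed
  have img: "W ` {0..<6} = (\<lambda>z. c + z) ` ((\<lambda>z. a * z) ` hexV)"
  proof -
    have "{0..<6::nat} = {0,1,2,3,4,5}" by auto
    moreover have "w * Complex 1 0 = Complex (1/2) (sqrt 3/2)" by (simp add: w_def complex_eq_iff)
    ultimately show ?thesis by (simp add: Wk hexV_def pw del: power_0 power_one_right)
  qed
  have lin: "linear (\<lambda>z. a * z)" by (rule bounded_linear.linear[OF bounded_linear_mult_right])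
  have cpt: "compact (convex hull hexV)" by (rule finite_imp_compact_convex_hull) (simp add: hexV_def)
  have "hexagon_area W = measure lebesgue ((\<lambda>z. c + z) ` ((\<lambda>z. a * z) ` (convex hull hexV)))"
    unfolding hexagon_area_def img convex_hull_translation convex_hull_linear_image[OF lin] ..
  also have "\<dots> = measure lebesgue ((\<lambda>z. a * z) ` (convex hull hexV))"
    using measure_translation[of c "(\<lambda>z. a * z) ` (convex hull hexV)"] by (simp only: )
  also have "\<dots> = (cmod a)^2 * measure lebesgue (convex hull hexV)"
    by (rule mult_meas[OF cpt])
  also have "\<dots> = (cmod a)^2 * (3 * sqrt 3 / 2)"
    using hexD_meas hexD_hull by simp
  finally show ?thesis using L by (simp only: mult.commute mult.left_commute)
qed

end
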